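(* Let $(X_i)_{i\in I}$ be a family of zero-dimensional coherent domains and $F\subseteq\prod_{i\in I}\mathcal V_{\le1}(X_i)\subseteq\prod_{i\in I}\mathcal V(X_i)$ a finite set. Then $\overline{\mathrm{conv}\,F}={\downarrow}\mathrm{conv}\,F$; in particular $b(F)={\downarrow}\mathrm{conv}\,F\cap{\uparrow}\mathrm{conv}\,F$.
   Context: A domain is a continuous dcpo; coherent means the intersection of two compact saturated subsets is compact; zero-dimensional means the Scott topology has a basis of clopens. $\mathcal V(X)$ is the set of continuous valuations on $X$ (strict, monotone, modular maps from Scott-opens to $[0,\infty]$ preserving directed unions), ordered pointwise, with pointwise addition and scaling; $\mathcal V_{\le1}(X)$ those with $\mu(X)\le1$. Products carry the componentwise order and operations. $\mathrm{conv}\,F$ is the set of finite convex combinations of elements of $F$, $\overline{A}$ the Scott closure, ${\downarrow}A$, ${\uparrow}A$ down- and up-closures, and $b(F)=\overline{\mathrm{conv}\,F}\cap{\uparrow}\mathrm{conv}\,F$. *)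

theory Defs
  imports "HOL-Analysis.Analysis" "HOL-Library.Extended_Nonnegative_Real"
begin

definition directed :: "'a set \<Rightarrow> ('a \<Rightarrow> 'a \<Rightarrow> bool) \<Rightarrow> 'a set \<Rightarrow> bool" where
  "directed D le S \<longleftrightarrow> S \<subseteq> D \<and> S \<noteq> {} \<and> (\<forall>x\<in>S. \<forall>y\<in>S. \<exists>z\<in>S. le x z \<and> le y z)"

definition is_lub :: "'a set \<Rightarrow> ('a \<Rightarrow> 'a \<Rightarrow> bool) \<Rightarrow> 'a set \<Rightarrow> 'a \<Rightarrow> bool" where
  "is_lub D le S s \<longleftrightarrow> s \<in> D \<and> (\<forall>x\<in>S. le x s) \<and> (\<forall>u\<in>D. (\<forall>x\<in>S. le x u) \<longrightarrow> le s u)"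

definition poset_on :: "'a set \<Rightarrow> ('a \<Rightarrow> 'a \<Rightarrow> bool) \<Rightarrow> bool" where
  "poset_on D le \<longleftrightarrow> (\<forall>x\<in>D. le x x) \<and> (\<forall>x\<in>D. \<forall>y\<in>D. le x y \<and> le y x \<longrightarrow> x = y)
     \<and> (\<forall>x\<in>D. \<forall>y\<in>D. \<forall>z\<in>D. le x y \<and> le y z \<longrightarrow> le x z)"

definition dcpo_on :: "'a set \<Rightarrow> ('a \<Rightarrow> 'a \<Rightarrow> bool) \<Rightarrow> bool" where
  "dcpo_on D le \<longleftrightarrow> poset_on D le \<and> (\<forall>S. directed D le S \<longrightarrow> (\<exists>s. is_lub D le S s))"

definition way_below :: "'a set \<Rightarrow> ('a \<Rightarrow> 'a \<Rightarrow> bool) \<Rightarrow> 'a \<Rightarrow> 'a \<Rightarrow> bool" where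
  "way_below D le x y \<longleftrightarrow> x \<in> D \<and> y \<in> D \<and>
     (\<forall>S s. directed D le S \<and> is_lub D le S s \<and> le y s \<longrightarrow> (\<exists>z\<in>S. le x z))"

definition domain_on :: "'a set \<Rightarrow> ('a \<Rightarrow> 'a \<Rightarrow> bool) \<Rightarrow> bool" where
  "domain_on D le \<longleftrightarrow> dcpo_on D le \<and>
     (\<forall>x\<in>D. directed D le {y\<in>D. way_below D le y x} \<and> is_lub D le {y\<in>D. way_below D le y x} x)"

definition scott_open :: "'a set \<Rightarrow> ('a \<Rightarrow> 'a \<Rightarrow> bool) \<Rightarrow> 'a set \<Rightarrow> bool" where
  "scott_open D le U \<longleftrightarrow> U \<subseteq> D \<and> (\<forall>x\<in>U. \<forall>y\<in>D. le x y \<longrightarrow> y \<in> U) \<and>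
     (\<forall>S s. directed D le S \<and> is_lub D le S s \<and> s \<in> U \<longrightarrow> S \<inter> U \<noteq> {})"

definition scott_closed :: "'a set \<Rightarrow> ('a \<Rightarrow> 'a \<Rightarrow> bool) \<Rightarrow> 'a set \<Rightarrow> bool" where
  "scott_closed D le C \<longleftrightarrow> scott_open D le (D - C) \<and> C \<subseteq> D"

definition scott_closure :: "'a set \<Rightarrow> ('a \<Rightarrow> 'a \<Rightarrow> bool) \<Rightarrow> 'a set \<Rightarrow> 'a set" where
  "scott_closure D le A = \<Inter>{C. scott_closed D le C \<and> A \<subseteq> C}"

definition scott_compact :: "'a set \<Rightarrow> ('a \<Rightarrow> 'a \<Rightarrow> bool) \<Rightarrow> 'a set \<Rightarrow> bool" where
  "scott_compact D le A \<longleftrightarrow> A \<subseteq> D \<and>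
     (\<forall>\<U>. (\<forall>U\<in>\<U>. scott_open D le U) \<and> A \<subseteq> \<Union>\<U> \<longrightarrow> (\<exists>\<V>\<subseteq>\<U>. finite \<V> \<and> A \<subseteq> \<Union>\<V>))"

definition scott_saturated :: "'a set \<Rightarrow> ('a \<Rightarrow> 'a \<Rightarrow> bool) \<Rightarrow> 'a set \<Rightarrow> bool" where
  "scott_saturated D le A \<longleftrightarrow> A \<subseteq> D \<and> A = D \<inter> \<Inter>{U. scott_open D le U \<and> A \<subseteq> U}"

definition coherent_on :: "'a set \<Rightarrow> ('a \<Rightarrow> 'a \<Rightarrow> bool) \<Rightarrow> bool" where
  "coherent_on D le \<longleftrightarrow> (\<forall>A B. scott_compact D le A \<and> scott_saturated D le A \<and>
      scott_compact D le B \<and> scott_saturated D le B \<longrightarrow> scott_compact D le (A \<inter> B))"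

definition zero_dim_on :: "'a set \<Rightarrow> ('a \<Rightarrow> 'a \<Rightarrow> bool) \<Rightarrow> bool" where
  "zero_dim_on D le \<longleftrightarrow> (\<forall>U x. scott_open D le U \<and> x \<in> U \<longrightarrow>
      (\<exists>V. scott_open D le V \<and> scott_open D le (D - V) \<and> x \<in> V \<and> V \<subseteq> U))"

text \<open>Continuous valuations, represented as functions on all sets that vanish
  off the Scott-open sets (canonical representative).\<close>
definition cont_val :: "'a set \<Rightarrow> ('a \<Rightarrow> 'a \<Rightarrow> bool) \<Rightarrow> ('a set \<Rightarrow> ennreal) \<Rightarrow> bool" where
  "cont_val D le \<mu> \<longleftrightarrow>
     (\<forall>U. \<not> scott_open D le U \<longrightarrow> \<mu> U = 0) \<and>
     \<mu> {} = 0 \<and>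
     (\<forall>U V. scott_open D le U \<and> scott_open D le V \<and> U \<subseteq> V \<longrightarrow> \<mu> U \<le> \<mu> V) \<and>
     (\<forall>U V. scott_open D le U \<and> scott_open D le V \<longrightarrow> \<mu> U + \<mu> V = \<mu> (U \<union> V) + \<mu> (U \<inter> V)) \<and>
     (\<forall>\<U>. \<U> \<noteq> {} \<and> (\<forall>U\<in>\<U>. scott_open D le U) \<and> (\<forall>U\<in>\<U>. \<forall>V\<in>\<U>. \<exists>W\<in>\<U>. U \<union> V \<subseteq> W)
        \<longrightarrow> \<mu> (\<Union>\<U>) = (SUP U\<in>\<U>. \<mu> U))"

definition prod_V :: "'i set \<Rightarrow> ('i \<Rightarrow> 'a set) \<Rightarrow> ('i \<Rightarrow> 'a \<Rightarrow> 'a \<Rightarrow> bool) \<Rightarrow> ('i \<Rightarrow> 'a set \<Rightarrow> ennreal) set" where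
  "prod_V I X le = {\<nu>. (\<forall>i\<in>I. cont_val (X i) (le i) (\<nu> i)) \<and> (\<forall>i. i \<notin> I \<longrightarrow> \<nu> i = (\<lambda>U. 0))}"

definition prod_V1 :: "'i set \<Rightarrow> ('i \<Rightarrow> 'a set) \<Rightarrow> ('i \<Rightarrow> 'a \<Rightarrow> 'a \<Rightarrow> bool) \<Rightarrow> ('i \<Rightarrow> 'a set \<Rightarrow> ennreal) set" where
  "prod_V1 I X le = {\<nu>\<in>prod_V I X le. \<forall>i\<in>I. \<nu> i (X i) \<le> 1}"

definition prod_le :: "'i set \<Rightarrow> ('i \<Rightarrow> 'a set) \<Rightarrow> ('i \<Rightarrow> 'a \<Rightarrow> 'a \<Rightarrow> bool)
    \<Rightarrow> ('i \<Rightarrow> 'a set \<Rightarrow> ennreal) \<Rightarrow> ('i \<Rightarrow> 'a set \<Rightarrow> ennreal) \<Rightarrow> bool" where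
  "prod_le I X le \<nu> \<nu>' \<longleftrightarrow> (\<forall>i\<in>I. \<forall>U. scott_open (X i) (le i) U \<longrightarrow> \<nu> i U \<le> \<nu>' i U)"

definition conv_hull :: "('i \<Rightarrow> 'a set \<Rightarrow> ennreal) set \<Rightarrow> ('i \<Rightarrow> 'a set \<Rightarrow> ennreal) set" where
  "conv_hull F = {\<nu>. \<exists>G c. finite G \<and> G \<subseteq> F \<and> (\<Sum>g\<in>G. c g) = 1 \<and>
      \<nu> = (\<lambda>i U. \<Sum>g\<in>G. c g * g i U)}"

definition down_set :: "'b set \<Rightarrow> ('b \<Rightarrow> 'b \<Rightarrow> bool) \<Rightarrow> 'b set \<Rightarrow> 'b set" where
  "down_set D le A = {x\<in>D. \<exists>a\<in>A. le x a}"

definition up_set :: "'b set \<Rightarrow> ('b \<Rightarrow> 'b \<Rightarrow> bool) \<Rightarrow> 'b set \<Rightarrow> 'b set" where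
  "up_set D le A = {x\<in>D. \<exists>a\<in>A. le a x}"

definition b_set :: "'i set \<Rightarrow> ('i \<Rightarrow> 'a set) \<Rightarrow> ('i \<Rightarrow> 'a \<Rightarrow> 'a \<Rightarrow> bool)
    \<Rightarrow> ('i \<Rightarrow> 'a set \<Rightarrow> ennreal) set \<Rightarrow> ('i \<Rightarrow> 'a set \<Rightarrow> ennreal) set" where
  "b_set I X le F = scott_closure (prod_V I X le) (prod_le I X le) (conv_hull F)
      \<inter> up_set (prod_V I X le) (prod_le I X le) (conv_hull F)"

end

theory Submission
  imports Defs
begin

lemma scott_open_top: "scott_open D le D"
  unfolding scott_open_def directed_def by auto

lemma cv_le1:
  assumes "cont_val D le \<mu>" "\<mu> D \<le> 1" shows "\<mu> U \<le> 1"
proof (cases "scott_open D le U")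
  case True
  then have "U \<subseteq> D" by (simp add: scott_open_def)
  with True assms scott_open_top[of D le] have "\<mu> U \<le> \<mu> D" unfolding cont_val_def by blast
  with assms show ?thesis by simp
next
  case False with assms show ?thesis unfolding cont_val_def by simp
qed

lemma sum_SUP_directed:
  fixes f :: "'g \<Rightarrow> 'u set \<Rightarrow> ennreal"
  assumes "finite G" "\<U> \<noteq> {}" "\<And>U V. U\<in>\<U> \<Longrightarrow> V\<in>\<U> \<Longrightarrow> \<exists>W\<in>\<U>. U \<union> V \<subseteq> W"
    "\<And>g U V. g\<in>G \<Longrightarrow> U\<in>\<U> \<Longrightarrow> V\<in>\<U> \<Longrightarrow> U \<subseteq> V \<Longrightarrow> f g U \<le> f g V"
  shows "(\<Sum>g\<in>G. SUP U\<in>\<U>. f g U) = (SUP U\<in>\<U>. \<Sum>g\<in>G. f g U)"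
  using assms(1,4)
proof (induction G rule: finite_induct)
  case empty then show ?case using assms(2) by simp
next
  case (insert a G)
  have "(\<Sum>g\<in>insert a G. SUP U\<in>\<U>. f g U) = (SUP U\<in>\<U>. f a U) + (SUP U\<in>\<U>. \<Sum>g\<in>G. f g U)"
    using insert by simp
  also have "\<dots> = (SUP U\<in>\<U>. f a U + (\<Sum>g\<in>G. f g U))"
  proof (rule SUP_add_directed_ennreal[symmetric])
    fix U V assume UV: "U \<in> \<U>" "V \<in> \<U>"
    then obtain W where W: "W \<in> \<U>" "U \<union> V \<subseteq> W" using assms(3) by blast
    have "f a U \<le> f a W" using insert.prems UV W by auto
    moreover have "(\<Sum>g\<in>G. f g V) \<le> (\<Sum>g\<in>G. f g W)"
      using insert.prems UV W by (intro sum_mono) auto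
    ultimately show "\<exists>k\<in>\<U>. f a U + (\<Sum>g\<in>G. f g V) \<le> f a k + (\<Sum>g\<in>G. f g k)"
      using W by (intro bexI[of _ W] add_mono) auto
  qed
  also have "\<dots> = (SUP U\<in>\<U>. \<Sum>g\<in>insert a G. f g U)" using insert by simp
  finally show ?case .
qed

lemma cv_comb:
  assumes "finite G" "\<And>g. g\<in>G \<Longrightarrow> cont_val D le (\<mu> g)"
  shows "cont_val D le (\<lambda>U. \<Sum>g\<in>G. c g * \<mu> g U)"
  unfolding cont_val_def
proof (intro conjI allI impI)
  fix U assume "\<not> scott_open D le U" then show "(\<Sum>g\<in>G. c g * \<mu> g U) = 0"
    using assms(2) unfolding cont_val_def by simp
next
  show "(\<Sum>g\<in>G. c g * \<mu> g {}) = 0" using assms(2) unfolding cont_val_def by simp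
next
  fix U V assume "scott_open D le U \<and> scott_open D le V \<and> U \<subseteq> V"
  then show "(\<Sum>g\<in>G. c g * \<mu> g U) \<le> (\<Sum>g\<in>G. c g * \<mu> g V)"
    using assms(2) unfolding cont_val_def by (intro sum_mono mult_left_mono) auto
next
  fix U V assume h: "scott_open D le U \<and> scott_open D le V"
  have "(\<Sum>g\<in>G. c g * \<mu> g U) + (\<Sum>g\<in>G. c g * \<mu> g V) = (\<Sum>g\<in>G. c g * (\<mu> g U + \<mu> g V))"
    by (simp add: sum.distrib distrib_left)
  also have "\<dots> = (\<Sum>g\<in>G. c g * (\<mu> g (U \<union> V) + \<mu> g (U \<inter> V)))"
    using h assms(2) unfolding cont_val_def by (intro sum.cong) auto
  also have "\<dots> = (\<Sum>g\<in>G. c g * \<mu> g (U \<union> V)) + (\<Sum>g\<in>G. c g * \<mu> g (U \<inter> V))"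
    by (simp add: sum.distrib distrib_left)
  finally show "(\<Sum>g\<in>G. c g * \<mu> g U) + (\<Sum>g\<in>G. c g * \<mu> g V) =
     (\<Sum>g\<in>G. c g * \<mu> g (U \<union> V)) + (\<Sum>g\<in>G. c g * \<mu> g (U \<inter> V))" .
next
  fix \<U>
  assume h: "\<U> \<noteq> {} \<and> (\<forall>U\<in>\<U>. scott_open D le U) \<and> (\<forall>U\<in>\<U>. \<forall>V\<in>\<U>. \<exists>W\<in>\<U>. U \<union> V \<subseteq> W)"
  have "(\<Sum>g\<in>G. c g * \<mu> g (\<Union>\<U>)) = (\<Sum>g\<in>G. SUP U\<in>\<U>. c g * \<mu> g U)"
    using h assms(2) unfolding cont_val_def by (intro sum.cong) (auto simp: SUP_mult_left_ennreal)
  also have "\<dots> = (SUP U\<in>\<U>. \<Sum>g\<in>G. c g * \<mu> g U)"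
  proof (rule sum_SUP_directed)
    fix g U V assume "g \<in> G" "U \<in> \<U>" "V \<in> \<U>" "U \<subseteq> V"
    then show "c g * \<mu> g U \<le> c g * \<mu> g V"
      using h assms(2) unfolding cont_val_def by (intro mult_left_mono) auto
  qed (use h assms(1) in auto)
  finally show "(\<Sum>g\<in>G. c g * \<mu> g (\<Union>\<U>)) = (SUP U\<in>\<U>. \<Sum>g\<in>G. c g * \<mu> g U)" .
qed

lemma conv_sub:
  assumes "F \<subseteq> prod_V I X le"
  shows "conv_hull F \<subseteq> prod_V I X le"
proof
  fix \<nu> assume "\<nu> \<in> conv_hull F"
  then obtain G c where G: "finite G" "G \<subseteq> F" "\<nu> = (\<lambda>i U. \<Sum>g\<in>G. c g * g i U)"
    unfolding conv_hull_def by blast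
  have "cont_val (X i) (le i) (\<nu> i)" if "i \<in> I" for i
    unfolding G(3) using G assms that by (intro cv_comb) (auto simp: prod_V_def)
  moreover have "\<nu> i = (\<lambda>U. 0)" if "i \<notin> I" for i
  proof -
    have "\<And>g. g \<in> G \<Longrightarrow> g i = (\<lambda>U. 0)" using G assms that by (auto simp: prod_V_def)
    then show ?thesis unfolding G(3) by (auto intro!: sum.neutral)
  qed
  ultimately show "\<nu> \<in> prod_V I X le" by (simp add: prod_V_def)
qed

definition comb :: "('i \<Rightarrow> 'a set \<Rightarrow> ennreal) set \<Rightarrow> (('i \<Rightarrow> 'a set \<Rightarrow> ennreal) \<Rightarrow> real) \<Rightarrow> 'i \<Rightarrow> 'a set \<Rightarrow> ennreal" where
  "comb F c = (\<lambda>i U. \<Sum>g\<in>F. ennreal (c g) * g i U)"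

lemma comb_in_conv:
  assumes "finite F" "\<And>g. g \<in> F \<Longrightarrow> 0 \<le> c g" "(\<Sum>g\<in>F. c g) = 1"
  shows "comb F c \<in> conv_hull F"
  unfolding conv_hull_def comb_def
proof (intro CollectI exI conjI)
  show "(\<Sum>g\<in>F. ennreal (c g)) = 1" using assms by (simp add: sum_ennreal)
qed (use assms in auto)

lemma comb_real:
  assumes "F \<subseteq> prod_V1 I X le" "i \<in> I" "\<And>g. g \<in> F \<Longrightarrow> 0 \<le> c g"
  shows "comb F c i U = ennreal (\<Sum>g\<in>F. c g * enn2real (g i U))"
proof -
  have fin: "g i U < top" if "g \<in> F" for g
  proof -
    have "cont_val (X i) (le i) (g i)" "g i (X i) \<le> 1" using assms that by (auto simp: prod_V1_def prod_V_def)
    then have "g i U \<le> 1" by (rule cv_le1)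
    then show ?thesis using order.strict_trans1 by fastforce
  qed
  have "ennreal (\<Sum>g\<in>F. c g * enn2real (g i U)) = (\<Sum>g\<in>F. ennreal (c g * enn2real (g i U)))"
    using assms by (intro sum_ennreal[symmetric]) auto
  also have "\<dots> = (\<Sum>g\<in>F. ennreal (c g) * g i U)"
    using assms fin by (intro sum.cong) (auto simp: ennreal_mult ennreal_enn2real)
  finally show ?thesis by (simp add: comb_def)
qed

lemma down_bound:
  assumes "finite F" "x \<in> down_set (prod_V I X le) (prod_le I X le) (conv_hull F)"
  shows "\<exists>c. (\<forall>g\<in>F. 0 \<le> c g \<and> c g \<le> 1) \<and> (\<forall>g. g \<notin> F \<longrightarrow> c g = 0) \<and> (\<Sum>g\<in>F. c g) = 1
     \<and> prod_le I X le x (comb F c)"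
proof -
  obtain a where a: "a \<in> conv_hull F" "prod_le I X le x a" using assms(2) by (auto simp: down_set_def)
  then obtain G d where G: "finite G" "G \<subseteq> F" "(\<Sum>g\<in>G. d g) = 1" "a = (\<lambda>i U. \<Sum>g\<in>G. d g * g i U)"
    unfolding conv_hull_def by blast
  have d1: "d g \<le> 1" if "g \<in> G" for g
    using member_le_sum[of g G d] G that by auto
  then have dtop: "d g < top" if "g \<in> G" for g using that order.strict_trans1 by fastforce
  define c where "c g = (if g \<in> G then enn2real (d g) else 0)" for g
  have ce: "ennreal (c g) = (if g \<in> G then d g else 0)" for g
    using dtop by (auto simp: c_def ennreal_enn2real)
  have "comb F c = a"
  proof (intro ext)
    fix i U
    have "comb F c i U = (\<Sum>g\<in>F. (if g \<in> G then d g * g i U else 0))"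
      unfolding comb_def ce by (intro sum.cong) auto
    also have "\<dots> = (\<Sum>g\<in>G. d g * g i U)"
      using G assms(1) by (simp add: sum.If_cases Int_absorb1)
    finally show "comb F c i U = a i U" using G by simp
  qed
  moreover have "(\<Sum>g\<in>F. c g) = 1"
  proof -
    have "(\<Sum>g\<in>F. c g) = (\<Sum>g\<in>G. enn2real (d g))"
      unfolding c_def using G assms(1) by (simp add: sum.If_cases Int_absorb1)
    also have "\<dots> = enn2real (\<Sum>g\<in>G. d g)" using dtop by (simp add: enn2real_sum)
    finally show ?thesis using G by simp
  qed
  moreover have "\<forall>g\<in>F. 0 \<le> c g \<and> c g \<le> 1"
    using d1 dtop by (auto simp: c_def enn2real_leI)
  moreover have "\<forall>g. g \<notin> F \<longrightarrow> c g = 0" using G by (auto simp: c_def)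
  ultimately show ?thesis using a by metis
qed

lemma directed_ub:
  assumes "directed D (prod_le I X le) S" "finite T" "T \<subseteq> S"
  shows "\<exists>z\<in>S. \<forall>x\<in>T. prod_le I X le x z"
  using assms(2,3)
proof (induction T rule: finite_induct)
  case empty then show ?case using assms(1) by (auto simp: directed_def)
next
  case (insert a T)
  then obtain z where z: "z \<in> S" "\<forall>x\<in>T. prod_le I X le x z" by auto
  then obtain w where w: "w \<in> S" "prod_le I X le a w" "prod_le I X le z w"
    using assms(1) insert.prems unfolding directed_def by blast
  have "\<forall>x\<in>T. prod_le I X le x w" using z w unfolding prod_le_def by (meson order_trans)
  then show ?case using w by auto
qed


lemma down_lub:
  fixes I :: "'i set" and X :: "'i \<Rightarrow> 'a set" and le :: "'i \<Rightarrow> 'a \<Rightarrow> 'a \<Rightarrow> bool"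
    and F :: "('i \<Rightarrow> 'a set \<Rightarrow> ennreal) set"
  assumes F: "finite F" "F \<subseteq> prod_V1 I X le"
    and S: "directed (prod_V I X le) (prod_le I X le) S" "is_lub (prod_V I X le) (prod_le I X le) S s"
    and sub: "S \<subseteq> down_set (prod_V I X le) (prod_le I X le) (conv_hull F)"
  shows "s \<in> down_set (prod_V I X le) (prod_le I X le) (conv_hull F)"
proof -
  define Dn where "Dn = down_set (prod_V I X le) (prod_le I X le) (conv_hull F)"
  define S0 where "S0 = PiE (UNIV::('i \<Rightarrow> 'a set \<Rightarrow> ennreal) set) (\<lambda>g. if g \<in> F then {0..1::real} else {0})"
  define K where "K x = {c. (\<Sum>g\<in>F. c g) = 1} \<inter>
     (\<Inter>i\<in>I. \<Inter>U\<in>{U. scott_open (X i) (le i) U}. {c. x i U \<le> ennreal (\<Sum>g\<in>F. c g * enn2real (g i U))})" for x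
  have cS0: "compact S0"
    unfolding S0_def
    using compactin_PiE[of "\<lambda>_. euclidean" UNIV "\<lambda>g. if g \<in> F then {0..1::real} else {0}"]
    by (simp add: euclidean_product_topology)
  have cont: "continuous_on UNIV (\<lambda>c::('i \<Rightarrow> 'a set \<Rightarrow> ennreal)\<Rightarrow>real. ennreal (\<Sum>g\<in>F. c g * r g))" for r
  proof -
    have "continuous_on UNIV (\<lambda>c::('i \<Rightarrow> 'a set \<Rightarrow> ennreal)\<Rightarrow>real. (\<Sum>g\<in>F. c g * r g))"
      by (intro continuous_intros continuous_on_product_coordinates)
    then show ?thesis by (intro continuous_on_ennreal)
  qed
  have c1: "closed {c::('i \<Rightarrow> 'a set \<Rightarrow> ennreal)\<Rightarrow>real. (\<Sum>g\<in>F. c g) = 1}"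
    by (intro closed_Collect_eq continuous_intros continuous_on_product_coordinates)
  have c2: "closed {c. x i U \<le> ennreal (\<Sum>g\<in>F. c g * enn2real (g i U))}" for x :: "'i \<Rightarrow> 'a set \<Rightarrow> ennreal" and i U
    by (intro closed_Collect_le continuous_intros cont)
  have cK: "closed (K x)" for x
    unfolding K_def by (intro closed_Int closed_INT c1 c2 ballI)
  have inK: "c \<in> S0 \<inter> K x" if "x \<in> S" "c \<in> S0" "(\<Sum>g\<in>F. c g) = 1" "prod_le I X le x (comb F c)" for x c
  proof -
    have nn: "\<And>g. g \<in> F \<Longrightarrow> 0 \<le> c g" using that(2) by (auto simp: S0_def PiE_iff split: if_splits)
    have "x i U \<le> ennreal (\<Sum>g\<in>F. c g * enn2real (g i U))" if "i \<in> I" "scott_open (X i) (le i) U" for i U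
      using \<open>prod_le I X le x (comb F c)\<close> that comb_real[OF F(2) \<open>i\<in>I\<close> nn] by (auto simp: prod_le_def)
    then show ?thesis using that unfolding K_def by auto
  qed
  have "S0 \<inter> (\<Inter>x\<in>S. K x) \<noteq> {}"
  proof (rule compact_imp_fip_image[OF cS0 cK])
    fix T assume T: "finite T" "T \<subseteq> S"
    obtain z where z: "z \<in> S" "\<forall>x\<in>T. prod_le I X le x z" using directed_ub[OF S(1) T] by blast
    then have "z \<in> down_set (prod_V I X le) (prod_le I X le) (conv_hull F)" using sub by auto
    then obtain c where c: "\<forall>g\<in>F. 0 \<le> c g \<and> c g \<le> 1" "\<forall>g. g \<notin> F \<longrightarrow> c g = 0" "(\<Sum>g\<in>F. c g) = 1"
      "prod_le I X le z (comb F c)" using down_bound[OF F(1)] by blast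
    have cS: "c \<in> S0" using c unfolding S0_def by (auto simp: PiE_iff)
    have "c \<in> S0 \<inter> K x" if "x \<in> T" for x
    proof (rule inK)
      show "prod_le I X le x (comb F c)" using z c(4) that unfolding prod_le_def by (meson order_trans)
    qed (use that T cS c in auto)
    then show "S0 \<inter> (\<Inter>x\<in>T. K x) \<noteq> {}" using cS by blast
  qed
  then obtain c where c: "c \<in> S0" "\<forall>x\<in>S. c \<in> K x" by blast
  have nn: "\<And>g. g \<in> F \<Longrightarrow> 0 \<le> c g" using c(1) by (auto simp: S0_def PiE_iff split: if_splits)
  have S_ne: "S \<noteq> {}" using S(1) by (auto simp: directed_def)
  then obtain x0 where "x0 \<in> S" by blast
  then have sum1: "(\<Sum>g\<in>F. c g) = 1" using c unfolding K_def by auto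
  have cc: "comb F c \<in> conv_hull F" using comb_in_conv[OF F(1) nn sum1] .
  have F': "F \<subseteq> prod_V I X le" using F(2) by (auto simp: prod_V1_def)
  have ccP: "comb F c \<in> prod_V I X le" using conv_sub[OF F'] cc by blast
  have ub: "prod_le I X le x (comb F c)" if "x \<in> S" for x
    unfolding prod_le_def
  proof (intro ballI allI impI)
    fix i U assume "i \<in> I" "scott_open (X i) (le i) U"
    then show "x i U \<le> comb F c i U"
      using c(2) that comb_real[OF F(2) \<open>i\<in>I\<close> nn] unfolding K_def by auto
  qed
  have "prod_le I X le s (comb F c)" using S(2) ccP ub unfolding is_lub_def by blast
  moreover have "s \<in> prod_V I X le" using S(2) unfolding is_lub_def by blast
  ultimately show ?thesis using cc unfolding down_set_def by blast
qed


theorem mainTheorem16: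
  fixes I :: "'i set" and X :: "'i \<Rightarrow> 'a set" and le :: "'i \<Rightarrow> 'a \<Rightarrow> 'a \<Rightarrow> bool"
    and F :: "('i \<Rightarrow> 'a set \<Rightarrow> ennreal) set"
  assumes "\<forall>i\<in>I. domain_on (X i) (le i) \<and> coherent_on (X i) (le i) \<and> zero_dim_on (X i) (le i)"
    and "finite F" and "F \<subseteq> prod_V1 I X le"
  shows "scott_closure (prod_V I X le) (prod_le I X le) (conv_hull F)
           = down_set (prod_V I X le) (prod_le I X le) (conv_hull F)
      \<and> b_set I X le F = down_set (prod_V I X le) (prod_le I X le) (conv_hull F)
           \<inter> up_set (prod_V I X le) (prod_le I X le) (conv_hull F)"
proof -
  define P where "P = prod_V I X le"
  define L where "L = prod_le I X le"
  define C where "C = conv_hull F"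
  define Dn where "Dn = down_set P L C"
  have F': "F \<subseteq> prod_V I X le" using assms(3) by (auto simp: prod_V1_def)
  have CP: "C \<subseteq> P" using conv_sub[OF F'] unfolding C_def P_def .
  have CD: "C \<subseteq> Dn" using CP unfolding Dn_def down_set_def L_def prod_le_def by auto
  have closedD: "scott_closed P L Dn"
    unfolding scott_closed_def scott_open_def
  proof (intro conjI allI impI ballI)
    show "P - Dn \<subseteq> P" by auto
    show "Dn \<subseteq> P" unfolding Dn_def down_set_def by auto
  next
    fix x y assume xy: "x \<in> P - Dn" "y \<in> P" "L x y"
    show "y \<in> P - Dn"
    proof
      show "y \<in> P" by fact
      show "y \<notin> Dn"
      proof
        assume "y \<in> Dn"
        then obtain a where a: "a \<in> C" "L y a" unfolding Dn_def down_set_def by auto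
        have "L x a" using xy(3) a(2) unfolding L_def prod_le_def by (blast intro: order_trans)
        then have "x \<in> Dn" using a xy(1) unfolding Dn_def down_set_def by auto
        with xy(1) show False by auto
      qed
    qed
  next
    fix S s assume h: "directed P L S \<and> is_lub P L S s \<and> s \<in> P - Dn"
    show "S \<inter> (P - Dn) \<noteq> {}"
    proof
      assume "S \<inter> (P - Dn) = {}"
      moreover have "S \<subseteq> P" using h by (auto simp: directed_def)
      ultimately have "S \<subseteq> Dn" by auto
      then have "s \<in> Dn" using down_lub[OF assms(2,3)] h unfolding Dn_def P_def L_def C_def by blast
      with h show False by auto
    qed
  qed
  have eq: "scott_closure P L C = Dn"
  proof
    show "scott_closure P L C \<subseteq> Dn" unfolding scott_closure_def using closedD CD by auto
  next
    show "Dn \<subseteq> scott_closure P L C" unfolding scott_closure_def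
    proof (intro subsetI InterI)
      fix x K assume x: "x \<in> Dn" and K: "K \<in> {K. scott_closed P L K \<and> C \<subseteq> K}"
      then obtain a where a: "a \<in> C" "L x a" "x \<in> P" unfolding Dn_def down_set_def by auto
      show "x \<in> K"
      proof (rule ccontr)
        assume "x \<notin> K"
        then have "x \<in> P - K" using a by auto
        then have "a \<in> P - K" using K a CP unfolding scott_closed_def scott_open_def by blast
        then show False using a K by auto
      qed
    qed
  qed
  show ?thesis
    using eq unfolding b_set_def P_def L_def C_def Dn_def by simp
qed

end
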